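(* Let $N\ge1$, $T>0$, and consider the problem of minimizing $\int_0^T\mathbb V(t)\,dt$, $\mathbb V=\frac1N\sum_i\xi_i^2$, over $\alpha\in\mathcal U_{FS}$, where $\dot\xi_i=-\xi_i+(1-\alpha_i)\bar\xi$, $\bar\xi=\frac1N\sum_j\xi_j$, with initial datum satisfying $\bar\xi(0)>0$ and $\xi_1(0)\ge\dots\ge\xi_N(0)$. Let $J(t)=\{i\in\{1,\dots,N\}:\xi_i(t)=\max_j\xi_j(t)\}$. The control $\alpha$ given by $\alpha_i(t)=1/|J(t)|$ for $i\in J(t)$ and $\alpha_i(t)=0$ for $i\notin J(t)$ (with $\xi$ the corresponding trajectory) is optimal for this problem.
   Context: $\mathcal U_{FS}$ is the set of measurable $\alpha:[0,T]\to[0,1]^N$ with $\sum_i\alpha_i(t)=1$ for all $t$. $|J(t)|$ is the cardinality of $J(t)$. *)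

theory Defs
  imports "HOL-Analysis.Analysis"
begin

text \<open>Indices are 0..N-1. A control is a function alpha t i, a trajectory xi t i.\<close>

definition admissible_control :: "nat \<Rightarrow> real \<Rightarrow> (real \<Rightarrow> nat \<Rightarrow> real) \<Rightarrow> bool" where
  "admissible_control N T \<alpha> \<longleftrightarrow>
     (\<forall>i<N. (\<lambda>t. \<alpha> t i) measurable_on {0..T}) \<and>
     (\<forall>t\<in>{0..T}. (\<forall>i<N. 0 \<le> \<alpha> t i \<and> \<alpha> t i \<le> 1) \<and> (\<Sum>i<N. \<alpha> t i) = 1)"

definition mean_state :: "nat \<Rightarrow> (nat \<Rightarrow> real) \<Rightarrow> real" where
  "mean_state N x = (\<Sum>j<N. x j) / real N"

text \<open>xi is a (Caratheodory) solution on [0,T] of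
  xi_i' = - xi_i + (1 - alpha_i) * mean(xi), xi(0) = x0.\<close>
definition is_trajectory :: "nat \<Rightarrow> real \<Rightarrow> (nat \<Rightarrow> real) \<Rightarrow> (real \<Rightarrow> nat \<Rightarrow> real)
    \<Rightarrow> (real \<Rightarrow> nat \<Rightarrow> real) \<Rightarrow> bool" where
  "is_trajectory N T x0 \<alpha> \<xi> \<longleftrightarrow>
     (\<forall>i<N. \<xi> 0 i = x0 i \<and> continuous_on {0..T} (\<lambda>t. \<xi> t i) \<and>
        (\<forall>t\<in>{0..T}. ((\<lambda>s. - \<xi> s i + (1 - \<alpha> s i) * mean_state N (\<xi> s))
                        has_integral (\<xi> t i - \<xi> 0 i)) {0..t}))"

definition variance_cost :: "nat \<Rightarrow> real \<Rightarrow> (real \<Rightarrow> nat \<Rightarrow> real) \<Rightarrow> real" where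
  "variance_cost N T \<xi> = integral {0..T} (\<lambda>t. (\<Sum>i<N. (\<xi> t i)^2) / real N)"

definition max_set :: "nat \<Rightarrow> (nat \<Rightarrow> real) \<Rightarrow> nat set" where
  "max_set N x = {i. i < N \<and> x i = Max (x ` {..<N})}"

definition is_max_feedback :: "nat \<Rightarrow> real \<Rightarrow> (real \<Rightarrow> nat \<Rightarrow> real) \<Rightarrow> (real \<Rightarrow> nat \<Rightarrow> real) \<Rightarrow> bool" where
  "is_max_feedback N T \<alpha> \<xi> \<longleftrightarrow>
     (\<forall>t\<in>{0..T}. \<forall>i<N. \<alpha> t i =
        (if i \<in> max_set N (\<xi> t) then 1 / real (card (max_set N (\<xi> t))) else 0))"

definition is_optimal :: "nat \<Rightarrow> real \<Rightarrow> (nat \<Rightarrow> real) \<Rightarrow> (real \<Rightarrow> nat \<Rightarrow> real) \<Rightarrow> (real \<Rightarrow> nat \<Rightarrow> real) \<Rightarrow> bool" where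
  "is_optimal N T x0 \<alpha> \<xi> \<longleftrightarrow>
     admissible_control N T \<alpha> \<and> is_trajectory N T x0 \<alpha> \<xi> \<and>
     (\<forall>\<beta> \<eta>. admissible_control N T \<beta> \<and> is_trajectory N T x0 \<beta> \<eta> \<longrightarrow>
        variance_cost N T \<xi> \<le> variance_cost N T \<eta>)"

end

theory Submission
  imports Defs
begin



lemma max_set_iff:
  assumes "N \<ge> 1"
  shows "i \<in> max_set N x \<longleftrightarrow> i < N \<and> (\<forall>j<N. x j \<le> x i)"
proof -
  have fin: "finite (x ` {..<N})" by auto
  have ne: "x ` {..<N} \<noteq> {}" using assms by (auto simp: lessThan_empty_iff)
  show ?thesis
  proof
    assume "i \<in> max_set N x"
    then have "i < N" "x i = Max (x ` {..<N})" by (auto simp: max_set_def)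
    then show "i < N \<and> (\<forall>j<N. x j \<le> x i)" using fin by auto
  next
    assume h: "i < N \<and> (\<forall>j<N. x j \<le> x i)"
    then have "Max (x ` {..<N}) = x i" using fin by (intro Max_eqI) auto
    then show "i \<in> max_set N x" using h by (auto simp: max_set_def)
  qed
qed

lemma max_set_cong:
  assumes "\<forall>j<N. x j = x' j"
  shows "max_set N x = max_set N x'"
proof -
  have "x ` {..<N} = x' ` {..<N}" using assms by (auto intro!: image_cong)
  then show ?thesis using assms by (auto simp: max_set_def)
qed

lemma mean_cong:
  assumes "\<forall>j<N. x j = x' j"
  shows "mean_state N x = mean_state N x'"
  using assms by (simp add: mean_state_def)

lemma max_set_nonempty:
  assumes "N \<ge> 1" shows "max_set N x \<noteq> {}" "finite (max_set N x)" "max_set N x \<subseteq> {..<N}"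
proof -
  have fin: "finite (x ` {..<N})" by auto
  have ne: "x ` {..<N} \<noteq> {}" using assms by (auto simp: lessThan_empty_iff)
  obtain i where "i < N" "x i = Max (x ` {..<N})" using Max_in[OF fin ne] by auto
  then show "max_set N x \<noteq> {}" by (auto simp: max_set_def)
  show "finite (max_set N x)" "max_set N x \<subseteq> {..<N}" by (auto simp: max_set_def)
qed

lemma has_integral_from:
  fixes f :: "real \<Rightarrow> real"
  assumes "(f has_integral A) {c..r}" "(f has_integral B) {c..a}" "c \<le> a" "a \<le> r"
  shows "(f has_integral (A - B)) {a..r}"
proof -
  have int: "f integrable_on {a..r}"
    using assms(1) assms(3,4) integrable_subinterval_real has_integral_integrable
    by (metis atLeastatMost_subset_iff order_refl)
  have "integral {c..a} f + integral {a..r} f = integral {c..r} f"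
    using Henstock_Kurzweil_Integration.integral_combine[of c a r f] assms has_integral_integrable by blast
  then have "integral {a..r} f = A - B" using assms(1,2) by (simp add: integral_unique)
  then show ?thesis using int by (metis has_integral_integral)
qed

lemma last_time:
  fixes a c :: real
  assumes "closed S" "a \<in> S" "a \<le> c" "c \<notin> S"
  obtains r0 where "a \<le> r0" "r0 < c" "r0 \<in> S" "\<And>x. r0 < x \<Longrightarrow> x \<le> c \<Longrightarrow> x \<notin> S"
proof -
  let ?S = "S \<inter> {a..c}"
  have cl: "closed ?S" using assms by auto
  have ne: "?S \<noteq> {}" using assms by auto
  have bdd: "bdd_above ?S" by auto
  have in1: "Sup ?S \<in> ?S" using closed_contains_Sup[OF ne bdd cl] .
  have ub: "x \<le> Sup ?S" if "x \<in> ?S" for x using cSup_upper[OF that bdd] .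
  have "a \<le> Sup ?S" using ub assms by auto
  moreover have "Sup ?S < c" using in1 assms by (cases "Sup ?S = c") auto
  moreover have "x \<notin> S" if "Sup ?S < x" "x \<le> c" for x
    using ub[of x] that \<open>a \<le> Sup ?S\<close> by auto
  ultimately show ?thesis using that in1 by blast
qed

lemma L1:
  fixes f p :: "real \<Rightarrow> real"
  assumes "a \<le> b" "continuous_on {a..b} f" "f a \<ge> 0"
    and I: "\<forall>r\<in>{a..b}. ((\<lambda>s. - f s + p s) has_integral (f r - f a)) {a..r}"
    and P: "\<forall>s\<in>{a<..b}. p s \<ge> 0"
  shows "\<forall>c\<in>{a..b}. f c \<ge> 0"
proof (rule ccontr)
  assume "\<not> (\<forall>c\<in>{a..b}. f c \<ge> 0)"
  then obtain c where c: "c \<in> {a..b}" "f c < 0" by auto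
  let ?S = "{a..c} \<inter> f -` {0..}"
  have "continuous_on {a..c} f" using assms(2) c by (auto intro: continuous_on_subset)
  then have cl: "closed ?S" by (intro continuous_closed_preimage) auto
  obtain r0 where r0: "a \<le> r0" "r0 < c" "r0 \<in> ?S" "\<And>x. r0 < x \<Longrightarrow> x \<le> c \<Longrightarrow> x \<notin> ?S"
    using last_time[OF cl, of a c] c assms(3) by auto
  have neg: "f x < 0" if "r0 < x" "x \<le> c" for x using r0(4)[OF that] that r0(1) by auto
  have i1: "((\<lambda>s. - f s + p s) has_integral (f c - f a)) {a..c}" using I c by auto
  have i2: "((\<lambda>s. - f s + p s) has_integral (f r0 - f a)) {a..r0}" using I c r0 by auto
  have i3: "((\<lambda>s. - f s + p s) has_integral (f c - f r0)) {r0..c}"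
    using has_integral_from[OF i1 i2 r0(1)] r0(2) by simp
  have i4: "((\<lambda>s. if s = r0 then 0 else - f s + p s) has_integral (f c - f r0)) {r0..c}"
    by (rule has_integral_spike_finite[OF _ _ i3, of "{r0}"]) auto
  have "0 \<le> f c - f r0"
  proof (rule has_integral_nonneg[OF i4])
    fix s assume s: "s \<in> {r0..c}"
    show "0 \<le> (if s = r0 then 0 else - f s + p s)"
    proof (cases "s = r0")
      case False
      then have "r0 < s" "s \<le> c" using s by auto
      moreover have "s \<in> {a<..b}" using \<open>r0 < s\<close> \<open>s \<le> c\<close> c r0(1) by auto
      ultimately show ?thesis using neg[of s] P False by force
    qed simp
  qed
  then show False using r0(3) c by auto
qed




lemma traj_cont_mean:
  assumes "\<forall>i<N. continuous_on S (\<lambda>t. \<xi> t i)" "N \<ge> 1"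
  shows "continuous_on S (\<lambda>t. mean_state N (\<xi> t))"
  unfolding mean_state_def using assms by (intro continuous_intros) auto

lemma mean_formula:
  assumes N1: "N \<ge> 1" and sum1: "\<forall>t\<in>{0..T}. (\<Sum>i<N. \<alpha> t i) = 1"
    and tr: "is_trajectory N T x0 \<alpha> \<xi>" and t: "t \<in> {0..T}"
  shows "mean_state N (\<xi> t) = mean_state N x0 * exp (- t / real N)"
proof -
  define g where "g r = mean_state N (\<xi> r)" for r
  have cont: "continuous_on {0..T} g" unfolding g_def
    using tr N1 by (intro traj_cont_mean) (auto simp: is_trajectory_def)
  have Npos: "real N > 0" using N1 by auto
  have g0: "g 0 = mean_state N x0" using tr by (auto simp: g_def mean_state_def is_trajectory_def)
  have geq: "g r = g 0 + integral {0..r} (\<lambda>s. - g s / real N)" if r: "r \<in> {0..T}" for r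
  proof -
    have "((\<lambda>s. \<Sum>i<N. - \<xi> s i + (1 - \<alpha> s i) * mean_state N (\<xi> s)) has_integral
        (\<Sum>i<N. \<xi> r i - \<xi> 0 i)) {0..r}"
      using tr r by (intro has_integral_sum) (auto simp: is_trajectory_def)
    then have "((\<lambda>s. (1 / real N) *\<^sub>R (\<Sum>i<N. - \<xi> s i + (1 - \<alpha> s i) * mean_state N (\<xi> s))) has_integral
        (1 / real N) *\<^sub>R (\<Sum>i<N. \<xi> r i - \<xi> 0 i)) {0..r}"
      by (rule has_integral_cmul)
    moreover have "(1 / real N) *\<^sub>R (\<Sum>i<N. - \<xi> s i + (1 - \<alpha> s i) * mean_state N (\<xi> s)) = - g s / real N"
      if s: "s \<in> {0..r}" for s
    proof -
      have "(\<Sum>i<N. \<alpha> s i) = 1" using sum1 s r by auto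
      then have "(\<Sum>i<N. - \<xi> s i + (1 - \<alpha> s i) * g s) = - (\<Sum>i<N. \<xi> s i) + (real N - 1) * g s"
        by (simp add: sum.distrib sum_subtractf sum_distrib_right[symmetric] sum_negf)
      also have "(\<Sum>i<N. \<xi> s i) = real N * g s" using Npos by (simp add: g_def mean_state_def)
      finally show ?thesis using Npos by (simp add: g_def field_simps)
    qed
    moreover have "(1 / real N) *\<^sub>R (\<Sum>i<N. \<xi> r i - \<xi> 0 i) = g r - g 0"
      using Npos by (simp add: g_def mean_state_def sum_subtractf diff_divide_distrib)
    ultimately have "((\<lambda>s. - g s / real N) has_integral (g r - g 0)) {0..r}"
      using has_integral_eq by (smt (verit))
    then have "integral {0..r} (\<lambda>s. - g s / real N) = g r - g 0" by (rule integral_unique)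
    then show ?thesis by linarith
  qed
  have cont2: "continuous_on {0..T} (\<lambda>s. - g s / real N)" using cont N1 by (intro continuous_intros) auto
  have dg: "(g has_real_derivative (- g x / real N)) (at x within {0..T})" if x: "x \<in> {0..T}" for x
  proof -
    have "((\<lambda>r. g 0 + integral {0..r} (\<lambda>s. - g s / real N)) has_real_derivative (0 + - g x / real N)) (at x within {0..T})"
      by (intro derivative_intros integral_has_real_derivative[OF cont2 x])
    then have "((\<lambda>r. g 0 + integral {0..r} (\<lambda>s. - g s / real N)) has_real_derivative (- g x / real N)) (at x within {0..T})"
      by simp
    then show ?thesis
    proof (rule has_field_derivative_transform_within[where d=1])
      show "g 0 + integral {0..y} (\<lambda>s. - g s / real N) = g y" if "y \<in> {0..T}" for y
        using geq[OF that] by simp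
    qed (use x in auto)
  qed
  have dh: "((\<lambda>r. g r * exp (r / real N)) has_real_derivative 0) (at x within {0..T})" if x: "x \<in> {0..T}" for x
  proof -
    have e: "((\<lambda>r. exp (r / real N)) has_real_derivative exp (x / real N) * (1 / real N)) (at x within {0..T})"
      using N1 by (auto intro!: derivative_eq_intros)
    have "((\<lambda>r. g r * exp (r / real N)) has_real_derivative
        (- g x / real N) * exp (x / real N) + (exp (x / real N) * (1 / real N)) * g x) (at x within {0..T})"
      using DERIV_mult[OF dg[OF x] e] by simp
    then show ?thesis using N1 by (simp add: field_simps)
  qed
  obtain c where c: "\<forall>x\<in>{0..T}. g x * exp (x / real N) = c"
    using has_field_derivative_zero_constant[OF convex_real_interval(5) dh] by blast
  have "0 \<in> {0..T}" using t by auto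
  then have "g t * exp (t / real N) = g 0" using c t by force
  then have "g t = g 0 * exp (- t / real N)"
    by (metis (no_types, lifting) add.inverse_inverse divide_minus_left exp_minus_inverse mult.assoc mult.commute mult.right_neutral)
  then show ?thesis using g0 by (simp add: g_def)
qed




lemma traj_int:
  assumes "is_trajectory N T x0 \<alpha> \<xi>" "i < N" "r \<in> {0..T}"
  shows "((\<lambda>s. - \<xi> s i + (1 - \<alpha> s i) * mean_state N (\<xi> s)) has_integral (\<xi> r i - \<xi> 0 i)) {0..r}"
  using assms by (auto simp: is_trajectory_def)

lemma support:
  assumes N1: "N \<ge> 1" and tr: "is_trajectory N T x0 \<alpha> \<xi>" and fb: "is_max_feedback N T \<alpha> \<xi>"
    and mpos: "\<forall>s\<in>{0..T}. mean_state N (\<xi> s) \<ge> 0"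
    and anon: "\<forall>s\<in>{0..T}. \<forall>j<N. \<alpha> s j \<ge> 0"
    and st: "0 \<le> s" "s \<le> t" "t \<le> T" and i: "i \<in> max_set N (\<xi> s)"
  shows "i \<in> max_set N (\<xi> t)"
proof (rule ccontr)
  assume nt: "i \<notin> max_set N (\<xi> t)"
  have iN: "i < N" using i max_set_iff[OF N1] by auto
  define S where "S = (\<Inter>j\<in>{..<N}. {0..T} \<inter> (\<lambda>x. \<xi> x i - \<xi> x j) -` {0..})"
  have contc: "continuous_on {0..T} (\<lambda>x. \<xi> x k)" if "k < N" for k
    using tr that by (auto simp: is_trajectory_def)
  have cl: "closed S" unfolding S_def
    using contc iN by (intro closed_INT ballI continuous_closed_preimage continuous_intros) auto
  have memS: "x \<in> S \<longleftrightarrow> x \<in> {0..T} \<and> i \<in> max_set N (\<xi> x)" for x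
    using N1 iN by (auto simp: S_def max_set_iff[OF N1])
  have sS: "s \<in> S" using memS i st by auto
  have tS: "t \<notin> S" using memS nt by auto
  obtain r0 where r0: "s \<le> r0" "r0 < t" "r0 \<in> S" "\<And>x. r0 < x \<Longrightarrow> x \<le> t \<Longrightarrow> x \<notin> S"
    using last_time[OF cl sS st(2) tS] by blast
  have ai0: "\<alpha> x i = 0" if "r0 < x" "x \<le> t" for x
  proof -
    have "x \<in> {0..T}" using that r0 st by auto
    then have "i \<notin> max_set N (\<xi> x)" using r0(4)[OF that] memS by auto
    then show ?thesis using fb iN \<open>x \<in> {0..T}\<close> by (auto simp: is_max_feedback_def)
  qed
  have "\<xi> t j \<le> \<xi> t i" if jN: "j < N" for j
  proof -
    define f where "f x = \<xi> x i - \<xi> x j" for x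
    define p where "p x = (\<alpha> x j - \<alpha> x i) * mean_state N (\<xi> x)" for x
    have sub: "{r0..t} \<subseteq> {0..T}" using r0 st by auto
    have c1: "continuous_on {r0..t} f" unfolding f_def
      using continuous_on_subset[OF contc[OF iN] sub] continuous_on_subset[OF contc[OF jN] sub]
      by (intro continuous_intros)
    have f0: "f r0 \<ge> 0" using r0(3) jN memS max_set_iff[OF N1] by (auto simp: f_def)
    have I: "\<forall>r\<in>{r0..t}. ((\<lambda>s. - f s + p s) has_integral (f r - f r0)) {r0..r}"
    proof
      fix r assume r: "r \<in> {r0..t}"
      let ?g = "\<lambda>s. (- \<xi> s i + (1 - \<alpha> s i) * mean_state N (\<xi> s)) - (- \<xi> s j + (1 - \<alpha> s j) * mean_state N (\<xi> s))"
      have h1: "(?g has_integral ((\<xi> r i - \<xi> 0 i) - (\<xi> r j - \<xi> 0 j))) {0..r}"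
        using r r0 st by (intro has_integral_diff traj_int[OF tr]) (auto simp: iN jN)
      have h2: "(?g has_integral ((\<xi> r0 i - \<xi> 0 i) - (\<xi> r0 j - \<xi> 0 j))) {0..r0}"
        using r r0 st by (intro has_integral_diff traj_int[OF tr]) (auto simp: iN jN)
      have "(?g has_integral (f r - f r0)) {r0..r}"
        using has_integral_from[OF h1 h2] r r0 st by (simp add: f_def algebra_simps)
      then show "((\<lambda>s. - f s + p s) has_integral (f r - f r0)) {r0..r}"
        by (rule has_integral_eq[rotated]) (simp add: f_def p_def algebra_simps)
    qed
    have P: "\<forall>x\<in>{r0<..t}. p x \<ge> 0"
    proof
      fix x assume x: "x \<in> {r0<..t}"
      then have "x \<in> {0..T}" using r0 st by auto
      then show "p x \<ge> 0" using ai0[of x] x anon mpos jN by (auto simp: p_def)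
    qed
    have "f t \<ge> 0" using L1[OF _ c1 f0 I P] r0 by auto
    then show ?thesis by (simp add: f_def)
  qed
  then have "i \<in> max_set N (\<xi> t)" using max_set_iff[OF N1] iN by auto
  then show False using nt by simp
qed




lemma pointwise:
  assumes N1: "N \<ge> 1" and m0: "mean_state N x0 > 0"
    and adm: "admissible_control N T \<alpha>" and tr: "is_trajectory N T x0 \<alpha> \<xi>" and fb: "is_max_feedback N T \<alpha> \<xi>"
    and admb: "admissible_control N T \<beta>" and trb: "is_trajectory N T x0 \<beta> \<eta>"
    and t: "t \<in> {0..T}"
  shows "(\<Sum>i<N. (\<xi> t i)^2) \<le> (\<Sum>i<N. (\<eta> t i)^2)"
proof -
  have sa: "\<forall>s\<in>{0..T}. (\<Sum>i<N. \<alpha> s i) = 1" and ba: "\<forall>s\<in>{0..T}. \<forall>i<N. 0 \<le> \<alpha> s i"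
    using adm by (auto simp: admissible_control_def)
  have sb: "\<forall>s\<in>{0..T}. (\<Sum>i<N. \<beta> s i) = 1" and bb: "\<forall>s\<in>{0..T}. \<forall>i<N. 0 \<le> \<beta> s i"
    using admb by (auto simp: admissible_control_def)
  define m where "m s = mean_state N x0 * exp (- s / real N)" for s
  have mxi: "mean_state N (\<xi> s) = m s" if "s \<in> {0..T}" for s
    using mean_formula[OF N1 sa tr that] by (simp add: m_def)
  have meta: "mean_state N (\<eta> s) = m s" if "s \<in> {0..T}" for s
    using mean_formula[OF N1 sb trb that] by (simp add: m_def)
  have mpos: "m s > 0" for s using m0 by (simp add: m_def)
  obtain i0 where i0: "i0 \<in> max_set N (\<xi> t)" using max_set_nonempty[OF N1] by blast
  define M where "M = \<xi> t i0"
  define c where "c i = \<xi> t i" for i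
  have cM: "c j \<le> M" if "j < N" for j using i0 that max_set_iff[OF N1] by (auto simp: c_def M_def)
  have cJ: "c j = M" if "j \<in> max_set N (\<xi> t)" for j
    using i0 that max_set_iff[OF N1] by (force simp: c_def M_def)
  define W where "W r = (\<Sum>i<N. c i * (\<eta> r i - \<xi> r i))" for r
  define p where "p s = m s * ((\<Sum>i<N. c i * \<alpha> s i) - (\<Sum>i<N. c i * \<beta> s i))" for s
  have contc: "continuous_on {0..T} (\<lambda>x. \<xi> x k)" "continuous_on {0..T} (\<lambda>x. \<eta> x k)" if "k < N" for k
    using tr trb that by (auto simp: is_trajectory_def)
  have sub: "{0..t} \<subseteq> {0..T}" using t by auto
  have cW: "continuous_on {0..t} W" unfolding W_def
    using contc continuous_on_subset[OF _ sub] by (intro continuous_intros) auto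
  have W0: "W 0 = 0" using tr trb by (simp add: W_def is_trajectory_def)
  have I: "\<forall>r\<in>{0..t}. ((\<lambda>s. - W s + p s) has_integral (W r - W 0)) {0..r}"
  proof
    fix r assume r: "r \<in> {0..t}"
    then have rT: "r \<in> {0..T}" using t by auto
    let ?g = "\<lambda>s. \<Sum>i<N. c i * ((- \<eta> s i + (1 - \<beta> s i) * mean_state N (\<eta> s)) - (- \<xi> s i + (1 - \<alpha> s i) * mean_state N (\<xi> s)))"
    have "(?g has_integral (\<Sum>i<N. c i * ((\<eta> r i - \<eta> 0 i) - (\<xi> r i - \<xi> 0 i)))) {0..r}"
      by (intro has_integral_sum has_integral_mult_right has_integral_diff traj_int[OF trb _ rT] traj_int[OF tr _ rT]) auto
    moreover have "(\<Sum>i<N. c i * ((\<eta> r i - \<eta> 0 i) - (\<xi> r i - \<xi> 0 i))) = W r - W 0"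
      by (simp add: W_def sum_subtractf[symmetric] algebra_simps)
    moreover have "?g s = - W s + p s" if s: "s \<in> {0..r}" for s
    proof -
      have sT: "s \<in> {0..T}" using s rT by auto
      have "?g s = (\<Sum>i<N. - (c i * (\<eta> s i - \<xi> s i)) + m s * (c i * \<alpha> s i) - m s * (c i * \<beta> s i))"
        using mxi[OF sT] meta[OF sT] by (intro sum.cong) (auto simp: algebra_simps)
      also have "\<dots> = - W s + p s"
        by (simp add: W_def p_def sum.distrib sum_subtractf sum_negf sum_distrib_left algebra_simps)
      finally show ?thesis .
    qed
    ultimately show "((\<lambda>s. - W s + p s) has_integral (W r - W 0)) {0..r}"
      using has_integral_eq by (smt (verit))
  qed
  have P: "\<forall>s\<in>{0<..t}. p s \<ge> 0"
  proof
    fix s assume s: "s \<in> {0<..t}"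
    then have sT: "s \<in> {0..T}" using t by auto
    have "(\<Sum>i<N. c i * \<alpha> s i) = (\<Sum>i<N. M * \<alpha> s i)"
    proof (rule sum.cong)
      fix i assume i: "i \<in> {..<N}"
      show "c i * \<alpha> s i = M * \<alpha> s i"
      proof (cases "i \<in> max_set N (\<xi> s)")
        case True
        then have "i \<in> max_set N (\<xi> t)" using support[OF N1 tr fb _ ba] mxi mpos s t
          by (metis less_imp_le greaterThanAtMost_iff atLeastAtMost_iff)
        then show ?thesis using cJ by simp
      next
        case False
        then have "\<alpha> s i = 0" using fb sT i by (auto simp: is_max_feedback_def)
        then show ?thesis by simp
      qed
    qed simp
    also have "\<dots> = M" using sa sT by (simp add: sum_distrib_left[symmetric])
    finally have e1: "(\<Sum>i<N. c i * \<alpha> s i) = M" .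
    have "(\<Sum>i<N. c i * \<beta> s i) \<le> (\<Sum>i<N. M * \<beta> s i)"
      using cM bb sT by (intro sum_mono mult_right_mono) auto
    also have "\<dots> = M" using sb sT by (simp add: sum_distrib_left[symmetric])
    finally show "p s \<ge> 0" using e1 mpos[of s] by (simp add: p_def)
  qed
  have "W t \<ge> 0" using L1[of 0 t W p] cW W0 I P t by auto
  have "(\<Sum>i<N. (\<eta> t i)^2) = (\<Sum>i<N. (\<xi> t i)^2 + 2 * (c i * (\<eta> t i - \<xi> t i)) + (\<eta> t i - \<xi> t i)^2)"
    by (intro sum.cong) (auto simp: c_def power2_eq_square algebra_simps)
  also have "\<dots> = (\<Sum>i<N. (\<xi> t i)^2) + 2 * W t + (\<Sum>i<N. (\<eta> t i - \<xi> t i)^2)"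
    by (simp add: W_def sum.distrib sum_distrib_left)
  also have "\<dots> \<ge> (\<Sum>i<N. (\<xi> t i)^2)"
    using \<open>W t \<ge> 0\<close> by (smt (verit) sum_nonneg zero_le_power2)
  finally show ?thesis .
qed




definition fbk :: "nat \<Rightarrow> (nat \<Rightarrow> real) \<Rightarrow> nat \<Rightarrow> real" where
  "fbk N x i = (if i \<in> max_set N x then 1 / real (card (max_set N x)) else 0)"

definition sm :: "nat \<Rightarrow> real \<Rightarrow> (nat \<Rightarrow> real) \<Rightarrow> real \<Rightarrow> real" where
  "sm N t0 y t = mean_state N y * exp (- (t - t0) / real N)"
definition sb :: "nat \<Rightarrow> real \<Rightarrow> (nat \<Rightarrow> real) \<Rightarrow> real \<Rightarrow> real" where
  "sb N t0 y t = real N / (real N - 1) * sm N t0 y t"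
definition slow :: "nat \<Rightarrow> real \<Rightarrow> (nat \<Rightarrow> real) \<Rightarrow> nat \<Rightarrow> real \<Rightarrow> real" where
  "slow N t0 y j t = exp (- (t - t0)) * (y j - sb N t0 y t0) + sb N t0 y t"
definition sv :: "nat \<Rightarrow> real \<Rightarrow> (nat \<Rightarrow> real) \<Rightarrow> nat \<Rightarrow> real \<Rightarrow> real" where
  "sv N t0 y k t = (real N * sm N t0 y t - exp (- (t - t0)) * (\<Sum>j\<in>{k..<N}. y j - sb N t0 y t0)
      - real (N - k) * sb N t0 y t) / real k"
definition seg :: "nat \<Rightarrow> real \<Rightarrow> (nat \<Rightarrow> real) \<Rightarrow> nat \<Rightarrow> real \<Rightarrow> nat \<Rightarrow> real" where
  "seg N t0 y k t i = (if i < k then sv N t0 y k t else slow N t0 y i t)"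

context
  fixes N :: nat and t0 :: real and y :: "nat \<Rightarrow> real" and k :: nat
  assumes N1: "N \<ge> 1" and k1: "1 \<le> k" and kN: "k \<le> N"
    and srt: "\<forall>i j. i \<le> j \<and> j < N \<longrightarrow> y j \<le> y i"
    and top: "\<forall>i<k. y i = y 0"
begin

lemma seg_init: "i < N \<Longrightarrow> seg N t0 y k t0 i = y i"
proof -
  assume iN: "i < N"
  have Npos: "real N > 0" using N1 by auto
  have split: "(\<Sum>j<N. y j) = (\<Sum>j<k. y j) + (\<Sum>j\<in>{k..<N}. y j)"
    using kN by (simp add: atLeast0LessThan[symmetric] sum.atLeastLessThan_concat)
  have "(\<Sum>j<k. y j) = (\<Sum>j<k. y 0)" by (rule sum.cong) (simp, metis lessThan_iff top)
  then have tk: "(\<Sum>j<k. y j) = real k * y 0" by simp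
  have "sv N t0 y k t0 = y 0"
    using split tk k1 Npos kN
    by (simp add: sv_def sm_def mean_state_def sum_subtractf of_nat_diff field_simps)
  then show ?thesis using iN top[rule_format, of i] by (cases "i < k") (auto simp: seg_def slow_def)
qed

lemma seg_sum: "(\<Sum>i<N. seg N t0 y k t i) = real N * sm N t0 y t"
proof -
  have "(\<Sum>i<N. seg N t0 y k t i) = (\<Sum>i<k. seg N t0 y k t i) + (\<Sum>i\<in>{k..<N}. seg N t0 y k t i)"
    using kN by (simp add: atLeast0LessThan[symmetric] sum.atLeastLessThan_concat)
  also have "(\<Sum>i<k. seg N t0 y k t i) = real k * sv N t0 y k t" by (simp add: seg_def)
  also have "(\<Sum>i\<in>{k..<N}. seg N t0 y k t i) = (\<Sum>i\<in>{k..<N}. slow N t0 y i t)" by (simp add: seg_def)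
  also have "\<dots> = exp (- (t - t0)) * (\<Sum>j\<in>{k..<N}. y j - sb N t0 y t0) + real (N - k) * sb N t0 y t"
    by (simp add: slow_def sum.distrib sum_distrib_left)
  finally show ?thesis using k1 by (simp add: sv_def field_simps)
qed

lemma seg_mean: "mean_state N (seg N t0 y k t) = sm N t0 y t"
  using seg_sum N1 by (simp add: mean_state_def)

lemma slow_mono: "k \<le> j \<Longrightarrow> j < N \<Longrightarrow> slow N t0 y j t \<le> slow N t0 y k t"
  using srt by (auto simp: slow_def intro!: mult_left_mono)

lemma seg_maxset:
  assumes "k < N \<longrightarrow> slow N t0 y k t < sv N t0 y k t"
  shows "max_set N (seg N t0 y k t) = {..<k}"
proof -
  have le: "seg N t0 y k t j \<le> sv N t0 y k t" if "j < N" for j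
    using assms slow_mono[of j t] that by (cases "j < k") (auto simp: seg_def)
  show ?thesis
  proof (intro set_eqI iffI)
    fix i assume "i \<in> max_set N (seg N t0 y k t)"
    then have i: "i < N" "\<forall>j<N. seg N t0 y k t j \<le> seg N t0 y k t i" using max_set_iff[OF N1] by auto
    show "i \<in> {..<k}"
    proof (rule ccontr)
      assume "i \<notin> {..<k}"
      then have "k \<le> i" by auto
      then have "k < N" using i by auto
      have "seg N t0 y k t 0 \<le> seg N t0 y k t i" using i N1 by auto
      then have "sv N t0 y k t \<le> slow N t0 y i t" using k1 \<open>k \<le> i\<close> by (simp add: seg_def)
      then show False using slow_mono[OF \<open>k \<le> i\<close> i(1), of t] assms \<open>k < N\<close> by auto
    qed
  next
    fix i assume "i \<in> {..<k}"
    then show "i \<in> max_set N (seg N t0 y k t)" using le kN max_set_iff[OF N1] by (auto simp: seg_def)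
  qed
qed

lemma seg_sorted:
  assumes "k < N \<longrightarrow> slow N t0 y k t \<le> sv N t0 y k t"
  shows "\<forall>i j. i \<le> j \<and> j < N \<longrightarrow> seg N t0 y k t j \<le> seg N t0 y k t i"
proof (intro allI impI)
  fix i j assume ij: "i \<le> j \<and> j < N"
  show "seg N t0 y k t j \<le> seg N t0 y k t i"
  proof (cases "j < k")
    case True then show ?thesis using ij by (simp add: seg_def)
  next
    case False
    then have kj: "k \<le> j" by simp
    show ?thesis
    proof (cases "i < k")
      case True
      then show ?thesis using kj ij assms slow_mono[OF kj, of t] by (auto simp: seg_def)
    next
      case False
      then show ?thesis using ij kj srt by (auto simp: seg_def slow_def intro!: mult_left_mono)
    qed
  qed
qed

lemma sm_cont: "continuous_on S (\<lambda>t. sm N t0 y t)"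
  unfolding sm_def using N1 by (intro continuous_intros) auto

lemma sb_cont: "continuous_on S (\<lambda>t. sb N t0 y t)"
  unfolding sb_def by (intro continuous_on_mult_left sm_cont)

lemma seg_cont: "continuous_on S (\<lambda>t. seg N t0 y k t i)"
proof (cases "i < k")
  case True
  then show ?thesis unfolding seg_def sv_def using k1
    by (simp only: if_True) (intro continuous_intros sm_cont sb_cont; simp)
next
  case False
  then show ?thesis unfolding seg_def slow_def
    by (simp only: if_False) (intro continuous_intros sm_cont sb_cont)
qed

lemma sm_deriv: "D = - sm N t0 y t / real N \<Longrightarrow> ((\<lambda>t. sm N t0 y t) has_real_derivative D) (at t within S)"
  unfolding sm_def using N1 by (auto intro!: derivative_eq_intros simp: field_simps)

lemma sb_deriv: "D = real N / (real N - 1) * (- sm N t0 y t / real N) \<Longrightarrow> ((\<lambda>t. sb N t0 y t) has_real_derivative D) (at t within S)"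
  unfolding sb_def by (simp only:) (rule DERIV_cmult, rule sm_deriv, rule refl)

lemma seg_deriv:
  assumes iN: "i < N"
  shows "((\<lambda>t. seg N t0 y k t i) has_real_derivative
     (- seg N t0 y k t i + (1 - (if i < k then 1 / real k else 0)) * sm N t0 y t)) (at t)"
proof (cases "i < k")
  case True
  let ?Sc = "(\<Sum>j\<in>{k..<N}. y j - sb N t0 y t0)"
  have "((\<lambda>t. sv N t0 y k t) has_real_derivative
     (real N * (- sm N t0 y t / real N) - (- exp (- (t - t0)) * ?Sc)
      - real (N - k) * (real N / (real N - 1) * (- sm N t0 y t / real N))) / real k) (at t)"
    unfolding sv_def using k1 by (auto intro!: derivative_eq_intros sm_deriv sb_deriv)
  moreover have "(real N * (- sm N t0 y t / real N) - (- exp (- (t - t0)) * ?Sc)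
      - real (N - k) * (real N / (real N - 1) * (- sm N t0 y t / real N))) / real k
    = - sv N t0 y k t + (1 - 1 / real k) * sm N t0 y t"
  proof (cases "N = 1")
    case True
    then have "k = 1" using k1 kN by auto
    then show ?thesis using True by (simp add: sv_def)
  next
    case False
    then have N2: "real N - 1 > 0" "real N > 0" using N1 by auto
    show ?thesis using N2 k1 kN
      by (simp add: sv_def sb_def of_nat_diff field_simps)
  qed
  ultimately show ?thesis using True by (simp add: seg_def)
next
  case False
  then have N2: "real N - 1 > 0" "real N > 0" using iN k1 by auto
  have "((\<lambda>t. slow N t0 y i t) has_real_derivative
     (- exp (- (t - t0)) * (y i - sb N t0 y t0) + real N / (real N - 1) * (- sm N t0 y t / real N))) (at t)"
    unfolding slow_def using N1 by (auto intro!: derivative_eq_intros sb_deriv)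
  moreover have "- exp (- (t - t0)) * (y i - sb N t0 y t0) + real N / (real N - 1) * (- sm N t0 y t / real N)
     = - slow N t0 y i t + sm N t0 y t"
  proof -
    have key: "real N / (real N - 1) * (- s / real N) = s - real N / (real N - 1) * s" for s
      using N2 by (simp add: field_simps)
    show ?thesis unfolding slow_def sb_def key[of "sm N t0 y t"] by simp
  qed
  ultimately show ?thesis using False by (simp add: seg_def)
qed

lemma seg_integral:
  assumes iN: "i < N" and tt: "t0 \<le> t"
    and D: "\<forall>x\<in>{t0<..<t}. k < N \<longrightarrow> slow N t0 y k x < sv N t0 y k x"
  shows "((\<lambda>s. - seg N t0 y k s i + (1 - fbk N (seg N t0 y k s) i) * mean_state N (seg N t0 y k s))
     has_integral (seg N t0 y k t i - seg N t0 y k t0 i)) {t0..t}"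
proof (rule fundamental_theorem_of_calculus_interior[OF tt seg_cont])
  fix x assume x: "x \<in> {t0<..<t}"
  have ms: "max_set N (seg N t0 y k x) = {..<k}" using seg_maxset D x by blast
  have "fbk N (seg N t0 y k x) i = (if i < k then 1 / real k else 0)"
    by (simp add: fbk_def ms)
  then show "((\<lambda>s. seg N t0 y k s i) has_vector_derivative
      (- seg N t0 y k x i + (1 - fbk N (seg N t0 y k x) i) * mean_state N (seg N t0 y k x))) (at x)"
    using seg_deriv[OF iN, of x] seg_mean[of x]
    by (simp add: has_real_derivative_iff_has_vector_derivative)
qed

end




definition solf :: "nat \<Rightarrow> real \<Rightarrow> real \<Rightarrow> (nat \<Rightarrow> real) \<Rightarrow> (real \<Rightarrow> nat \<Rightarrow> real) \<Rightarrow> bool" where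
  "solf N T t0 y \<xi> \<longleftrightarrow> (\<forall>i<N. \<xi> t0 i = y i) \<and> (\<forall>i<N. continuous_on {t0..T} (\<lambda>t. \<xi> t i)) \<and>
    (\<forall>i<N. \<forall>t\<in>{t0..T}. ((\<lambda>s. - \<xi> s i + (1 - fbk N (\<xi> s) i) * mean_state N (\<xi> s))
        has_integral (\<xi> t i - \<xi> t0 i)) {t0..t})"

lemma fbk_cong: "\<forall>j<N. x j = x' j \<Longrightarrow> fbk N x i = fbk N x' i"
  using max_set_cong[of N x x'] by (simp add: fbk_def)

lemma choose_k:
  fixes y :: "nat \<Rightarrow> real"
  assumes srt: "\<forall>i j. i \<le> j \<and> j < N \<longrightarrow> y j \<le> y i" and kN: "k \<le> N" and top: "\<forall>i<k. y i = y 0"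
  obtains k' where "k \<le> k'" "k' \<le> N" "\<forall>i<k'. y i = y 0" "k' < N \<longrightarrow> y k' < y 0"
proof -
  define A where "A = {i. i \<le> N \<and> (\<forall>j<i. y j = y 0)}"
  have fin: "finite A" unfolding A_def by (rule finite_subset[of _ "{..N}"]) auto
  have kA: "k \<in> A" unfolding A_def using kN top by blast
  define k' where "k' = Max A"
  have k'A: "k' \<in> A" unfolding k'_def by (rule Max_in[OF fin]) (use kA in blast)
  have "k \<le> k'" using Max_ge[OF fin kA] by (simp add: k'_def)
  moreover have k'N: "k' \<le> N" using k'A unfolding A_def by blast
  moreover have k'top: "\<forall>i<k'. y i = y 0" using k'A unfolding A_def by blast
  moreover have "k' < N \<longrightarrow> y k' < y 0"
  proof
    assume lt: "k' < N"
    have "Suc k' \<notin> A" using Max_ge[OF fin, of "Suc k'"] unfolding k'_def[symmetric] by linarith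
    then have "\<not> (\<forall>j<Suc k'. y j = y 0)" using lt unfolding A_def by simp
    then obtain j where j: "j < Suc k'" "y j \<noteq> y 0" by blast
    then have "j = k'" using k'top less_Suc_eq by blast
    then have "y k' \<noteq> y 0" using j by simp
    moreover have "y k' \<le> y 0" using srt lt by blast
    ultimately show "y k' < y 0" by simp
  qed
  ultimately show ?thesis using that by blast
qed

lemma first_time:
  fixes a c :: real
  assumes "closed S" "a \<notin> S" "c \<in> S" "a \<le> c"
  obtains tau where "a < tau" "tau \<le> c" "tau \<in> S" "\<And>x. a \<le> x \<Longrightarrow> x < tau \<Longrightarrow> x \<notin> S"
proof -
  let ?S = "S \<inter> {a..c}"
  have cl: "closed ?S" using assms by auto
  have ne: "?S \<noteq> {}" using assms by auto
  have bdd: "bdd_below ?S" by auto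
  have in1: "Inf ?S \<in> ?S" using closed_contains_Inf[OF ne bdd cl] .
  have lb: "Inf ?S \<le> x" if "x \<in> ?S" for x using cInf_lower[OF that bdd] .
  have "a < Inf ?S" using in1 assms by (cases "Inf ?S = a") auto
  moreover have "Inf ?S \<le> c" using in1 by auto
  moreover have "x \<notin> S" if "a \<le> x" "x < Inf ?S" for x
    using lb[of x] that \<open>Inf ?S \<le> c\<close> by auto
  ultimately show ?thesis using that in1 by blast
qed

lemma exist_sol:
  assumes N1: "N \<ge> 1"
  shows "1 \<le> k \<Longrightarrow> k \<le> N \<Longrightarrow> t0 \<le> T \<Longrightarrow> \<forall>i j. i \<le> j \<and> j < N \<longrightarrow> y j \<le> y i \<Longrightarrow>
    \<forall>i<k. y i = y 0 \<Longrightarrow> (k < N \<longrightarrow> y k < y 0) \<Longrightarrow> mean_state N y > 0 \<Longrightarrow> \<exists>\<xi>. solf N T t0 y \<xi>"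
proof (induction "N - k" arbitrary: k t0 y rule: less_induct)
  case less
  note k1 = less.prems(1) and kN = less.prems(2) and tT = less.prems(3) and srt = less.prems(4)
    and top = less.prems(5) and gap = less.prems(6) and mpos = less.prems(7)
  let ?seg = "seg N t0 y k"
  have sinit: "\<forall>i<N. ?seg t0 i = y i" using seg_init[OF N1 k1 kN srt top] by blast
  have scont: "\<forall>i<N. continuous_on S (\<lambda>t. ?seg t i)" for S using seg_cont[OF N1 k1 kN srt top] by blast
  have sint: "((\<lambda>s. - ?seg s i + (1 - fbk N (?seg s) i) * mean_state N (?seg s))
     has_integral (?seg t i - ?seg t0 i)) {t0..t}"
    if "i < N" "t0 \<le> t" "\<forall>x\<in>{t0<..<t}. k < N \<longrightarrow> slow N t0 y k x < sv N t0 y k x" for i t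
    using seg_integral[OF N1 k1 kN srt top that] .
  show ?case
  proof (cases "\<forall>x\<in>{t0..T}. k < N \<longrightarrow> slow N t0 y k x < sv N t0 y k x")
    case True
    have "solf N T t0 y ?seg" unfolding solf_def
    proof (intro conjI allI impI ballI)
      fix i t assume i: "i < N" and t: "t \<in> {t0..T}"
      have "((\<lambda>s. - ?seg s i + (1 - fbk N (?seg s) i) * mean_state N (?seg s))
           has_integral (?seg t i - ?seg t0 i)) {t0..t}"
        by (rule sint) (use True t i in auto)
      then show "((\<lambda>s. - ?seg s i + (1 - fbk N (?seg s) i) * mean_state N (?seg s))
           has_integral (?seg t i - ?seg t0 i)) {t0..t}" .
    qed (use sinit scont in auto)
    then show ?thesis by blast
  next
    case False
    then obtain x1 where x1: "x1 \<in> {t0..T}" "k < N" "\<not> slow N t0 y k x1 < sv N t0 y k x1" by auto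
    define D where "D x = sv N t0 y k x - slow N t0 y k x" for x
    have Dcont: "continuous_on S D" for S
    proof -
      have "D x = ?seg x 0 - ?seg x k" for x using k1 x1 by (simp add: D_def seg_def)
      then have "D = (\<lambda>x. ?seg x 0 - ?seg x k)" by auto
      then show ?thesis using scont x1(2) N1 by (auto intro!: continuous_intros)
    qed
    have Dt0: "D t0 > 0"
    proof -
      have "D t0 = ?seg t0 0 - ?seg t0 k" using k1 x1 by (simp add: D_def seg_def)
      then show ?thesis using sinit gap x1(2) N1 by auto
    qed
    let ?S = "{x. D x \<le> 0}"
    have cl: "closed ?S" using Dcont by (intro closed_Collect_le) (auto intro: continuous_intros)
    obtain tau where tau: "t0 < tau" "tau \<le> x1" "tau \<in> ?S" "\<And>x. t0 \<le> x \<Longrightarrow> x < tau \<Longrightarrow> x \<notin> ?S"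
    proof -
      have "D x1 \<le> 0" using x1(3) by (simp add: D_def)
      then show ?thesis using first_time[OF cl, of t0 x1] Dt0 x1 that by auto
    qed
    have Dtau: "D tau = 0"
    proof (rule ccontr)
      assume "D tau \<noteq> 0"
      then have "D tau < 0" using tau(3) by auto
      then obtain z where "z \<ge> t0" "z \<le> tau" "(\<lambda>x. - D x) z = 0"
        using IVT'[of "\<lambda>x. - D x" t0 0 tau] Dt0 tau(1) Dcont by (auto intro: continuous_intros)
      then show False using tau(4)[of z] \<open>D tau < 0\<close> by (cases "z = tau") auto
    qed
    have Dpos: "\<forall>x\<in>{t0..<tau}. slow N t0 y k x < sv N t0 y k x"
    proof
      fix x assume "x \<in> {t0..<tau}"
      then have "\<not> D x \<le> 0" using tau(4) by auto
      then show "slow N t0 y k x < sv N t0 y k x" by (simp add: D_def)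
    qed
    define y' where "y' = ?seg tau"
    have srt': "\<forall>i j. i \<le> j \<and> j < N \<longrightarrow> y' j \<le> y' i"
      unfolding y'_def using seg_sorted[OF N1 k1 kN srt top, where t=tau] Dtau by (auto simp: D_def)
    have Dtau': "slow N t0 y k tau = sv N t0 y k tau" using Dtau by (simp add: D_def)
    have y'0: "y' 0 = sv N t0 y k tau" using k1 by (simp add: y'_def seg_def)
    have top1: "\<forall>i<Suc k. y' i = y' 0"
    proof (intro allI impI)
      fix i assume i: "i < Suc k"
      show "y' i = y' 0"
      proof (cases "i < k")
        case True then show ?thesis using y'0 by (simp add: y'_def seg_def)
      next
        case False then have "i = k" using i by simp
        then show ?thesis using y'0 Dtau' by (simp add: y'_def seg_def)
      qed
    qed
    have skN: "Suc k \<le> N" using x1(2) by simp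
    obtain k' where k': "Suc k \<le> k'" "k' \<le> N" "\<forall>i<k'. y' i = y' 0" "k' < N \<longrightarrow> y' k' < y' 0"
      by (rule choose_k[OF srt' skN top1])
    have mpos': "mean_state N y' > 0"
    proof -
      have "mean_state N y' = sm N t0 y tau" unfolding y'_def by (rule seg_mean[OF N1 k1 kN srt top])
      then show ?thesis using mpos by (simp add: sm_def)
    qed
    have lt: "N - k' < N - k" using k'(1,2) x1(2) by linarith
    have tauT: "tau \<le> T" using tau x1 by auto
    have k'1: "1 \<le> k'" using k'(1) by linarith
    obtain \<xi>2 where s2: "solf N T tau y' \<xi>2"
      using less.hyps[OF lt k'1 k'(2) tauT srt' k'(3) k'(4) mpos'] by blast
    define \<xi> where "\<xi> t = (if t \<le> tau then ?seg t else \<xi>2 t)" for t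
    have x2init: "\<forall>i<N. \<xi>2 tau i = ?seg tau i" using s2 by (simp add: solf_def y'_def)
    have x2cont: "\<forall>i<N. continuous_on {tau..T} (\<lambda>t. \<xi>2 t i)" using s2 unfolding solf_def by blast
    have x2int: "\<forall>i<N. \<forall>t\<in>{tau..T}. ((\<lambda>s. - \<xi>2 s i + (1 - fbk N (\<xi>2 s) i) * mean_state N (\<xi>2 s))
        has_integral (\<xi>2 t i - \<xi>2 tau i)) {tau..t}" using s2 unfolding solf_def by blast
    have "solf N T t0 y \<xi>"
      unfolding solf_def
    proof (intro conjI allI impI ballI)
      fix i assume i: "i < N"
      show "\<xi> t0 i = y i" using sinit i tau by (simp add: \<xi>_def)
      have e1: "{t \<in> {t0..T}. t \<le> tau} = {t0..tau}" using tauT by auto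
      have e2: "{t \<in> {t0..T}. tau \<le> t} = {tau..T}" using tau by auto
      have "continuous_on {t0..T} (\<lambda>t. if t \<le> tau then ?seg t i else \<xi>2 t i)"
      proof (rule continuous_on_cases_1)
        show "continuous_on {t \<in> {t0..T}. t \<le> tau} (\<lambda>t. ?seg t i)" using scont i by blast
        show "continuous_on {t \<in> {t0..T}. tau \<le> t} (\<lambda>t. \<xi>2 t i)" unfolding e2 using x2cont i by blast
        show "tau \<in> {t0..T} \<Longrightarrow> ?seg tau i = \<xi>2 tau i" using x2init i by simp
      qed
      note C = this
      have E: "(\<lambda>t. \<xi> t i) = (\<lambda>t. if t \<le> tau then ?seg t i else \<xi>2 t i)"
        by (rule ext) (simp add: \<xi>_def)
      show "continuous_on {t0..T} (\<lambda>t. \<xi> t i)" unfolding E by (rule C)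
    next
      fix i t assume i: "i < N" and t: "t \<in> {t0..T}"
      let ?F = "\<lambda>s. - \<xi> s i + (1 - fbk N (\<xi> s) i) * mean_state N (\<xi> s)"
      let ?G = "\<lambda>s. - ?seg s i + (1 - fbk N (?seg s) i) * mean_state N (?seg s)"
      let ?H = "\<lambda>s. - \<xi>2 s i + (1 - fbk N (\<xi>2 s) i) * mean_state N (\<xi>2 s)"
      have FG: "?F s = ?G s" if "s \<le> tau" for s using that by (simp add: \<xi>_def)
      have FH: "?F s = ?H s" if "tau \<le> s" for s
      proof (cases "s = tau")
        case True
        have "\<forall>j<N. \<xi> s j = \<xi>2 s j" using x2init True by (simp add: \<xi>_def)
        then show ?thesis using i fbk_cong[of N "\<xi> s" "\<xi>2 s"] mean_cong[of N "\<xi> s" "\<xi>2 s"] by simp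
      next
        case False then show ?thesis using that by (simp add: \<xi>_def)
      qed
      show "(?F has_integral (\<xi> t i - \<xi> t0 i)) {t0..t}"
      proof (cases "t \<le> tau")
        case True
        have "(?G has_integral (?seg t i - ?seg t0 i)) {t0..t}"
          using Dpos True t by (intro sint i) auto
        then have "(?F has_integral (?seg t i - ?seg t0 i)) {t0..t}"
          by (rule has_integral_eq[rotated]) (use FG True in auto)
        moreover have "?seg t i - ?seg t0 i = \<xi> t i - \<xi> t0 i" using True t by (simp add: \<xi>_def)
        ultimately show ?thesis by simp
      next
        case False
        have g: "(?G has_integral (?seg tau i - ?seg t0 i)) {t0..tau}"
          using Dpos tau by (intro sint i) auto
        then have g': "(?F has_integral (?seg tau i - ?seg t0 i)) {t0..tau}"
          by (rule has_integral_eq[rotated]) (use FG in auto)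
        have h: "(?H has_integral (\<xi>2 t i - \<xi>2 tau i)) {tau..t}" using x2int i t False by auto
        then have h': "(?F has_integral (\<xi>2 t i - \<xi>2 tau i)) {tau..t}"
          by (rule has_integral_eq[rotated]) (use FH in auto)
        have "(?F has_integral ((?seg tau i - ?seg t0 i) + (\<xi>2 t i - \<xi>2 tau i))) {t0..t}"
          by (rule has_integral_combine[OF _ _ g' h']) (use tau False in auto)
        moreover have "(?seg tau i - ?seg t0 i) + (\<xi>2 t i - \<xi>2 tau i) = \<xi> t i - \<xi> t0 i"
          using x2init i False tau by (simp add: \<xi>_def)
        ultimately show ?thesis by simp
      qed
    qed
    then show ?thesis by blast
  qed
qed




lemma meas_alpha:
  assumes N1: "N \<ge> 1" and T: "T \<ge> 0" and sum1: "\<forall>t\<in>{0..T}. (\<Sum>i<N. \<alpha> t i) = 1"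
    and tr: "is_trajectory N T x0 \<alpha> \<xi>" and m0: "mean_state N x0 > 0" and i: "i < N"
  shows "(\<lambda>t. \<alpha> t i) measurable_on {0..T}"
proof -
  define g where "g s = mean_state N (\<xi> s)" for s
  have gc: "continuous_on {0..T} g" unfolding g_def
    using tr N1 by (intro traj_cont_mean) (auto simp: is_trajectory_def)
  have gpos: "g s > 0" if "s \<in> {0..T}" for s
    using mean_formula[OF N1 sum1 tr that] m0 by (simp add: g_def)
  have xc: "continuous_on {0..T} (\<lambda>s. \<xi> s i)" using tr i by (auto simp: is_trajectory_def)
  have F: "(\<lambda>s. - \<xi> s i + (1 - \<alpha> s i) * g s) integrable_on {0..T}"
    using traj_int[OF tr i, of T] T unfolding g_def by (auto intro: has_integral_integrable)
  have eq: "(\<lambda>s. \<alpha> s i * g s) = (\<lambda>s. (- \<xi> s i + g s) - (- \<xi> s i + (1 - \<alpha> s i) * g s))"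
    by (rule ext) (simp add: algebra_simps)
  have "(\<lambda>s. \<alpha> s i * g s) integrable_on {0..T}"
  proof -
    have i1: "(\<lambda>s. - \<xi> s i + g s) integrable_on {0..T}"
      using xc gc by (intro integrable_continuous_interval continuous_intros)
    show ?thesis unfolding eq by (rule integrable_diff[OF i1 F])
  qed
  then have m1: "(\<lambda>s. \<alpha> s i * g s) \<in> borel_measurable (lebesgue_on {0..T})"
    by (rule integrable_imp_measurable)
  have "continuous_on {0..T} (\<lambda>s. 1 / g s)" using gc gpos by (intro continuous_intros) force+
  then have m2: "(\<lambda>s. 1 / g s) \<in> borel_measurable (lebesgue_on {0..T})"
    by (rule continuous_imp_measurable_on_sets_lebesgue) simp
  have m3: "(\<lambda>s. \<alpha> s i * g s * (1 / g s)) \<in> borel_measurable (lebesgue_on {0..T})"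
    using m1 m2 by (rule borel_measurable_times)
  have "(\<lambda>s. \<alpha> s i) \<in> borel_measurable (lebesgue_on {0..T})"
  proof (rule measurable_cong[THEN iffD1, OF _ m3])
    fix w assume "w \<in> space (lebesgue_on {0..T})"
    then have "w \<in> {0..T}" by simp
    then show "\<alpha> w i * g w * (1 / g w) = \<alpha> w i" using gpos[of w] by simp
  qed
  then show ?thesis by (subst measurable_on_iff_borel_measurable) auto
qed

theorem theorem8:
  fixes N :: nat and T :: real and x0 :: "nat \<Rightarrow> real"
  assumes "N \<ge> 1" and "T > 0"
    and "mean_state N x0 > 0"
    and "\<forall>i j. i \<le> j \<and> j < N \<longrightarrow> x0 j \<le> x0 i"
  shows "(\<exists>\<alpha> \<xi>. admissible_control N T \<alpha> \<and> is_trajectory N T x0 \<alpha> \<xi> \<and> is_max_feedback N T \<alpha> \<xi>)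
    \<and> (\<forall>\<alpha> \<xi>. admissible_control N T \<alpha> \<and> is_trajectory N T x0 \<alpha> \<xi> \<and> is_max_feedback N T \<alpha> \<xi>
          \<longrightarrow> is_optimal N T x0 \<alpha> \<xi>)"
proof
  note N1 = assms(1) and Tpos = assms(2) and m0 = assms(3) and srt = assms(4)
  show "\<exists>\<alpha> \<xi>. admissible_control N T \<alpha> \<and> is_trajectory N T x0 \<alpha> \<xi> \<and> is_max_feedback N T \<alpha> \<xi>"
  proof -
    have top0: "\<forall>i<1. x0 i = x0 0" by simp
    obtain k0 where k0: "1 \<le> k0" "k0 \<le> N" "\<forall>i<k0. x0 i = x0 0" "k0 < N \<longrightarrow> x0 k0 < x0 0"
      by (rule choose_k[OF srt N1 top0])
    have "\<exists>\<xi>. solf N T 0 x0 \<xi>"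
      by (rule exist_sol[OF N1 k0(1,2) _ srt k0(3,4) m0]) (use Tpos in simp)
    then obtain \<xi> where s: "solf N T 0 x0 \<xi>" by blast
    define \<alpha> where "\<alpha> t i = fbk N (\<xi> t) i" for t i
    have tr: "is_trajectory N T x0 \<alpha> \<xi>"
      using s unfolding solf_def is_trajectory_def \<alpha>_def by blast
    have bnd: "\<forall>i<N. 0 \<le> \<alpha> t i \<and> \<alpha> t i \<le> 1" for t
    proof (intro allI impI)
      fix i assume "i < N"
      have "card (max_set N (\<xi> t)) \<ge> 1"
        using max_set_nonempty[OF N1, of "\<xi> t"] by (simp add: Suc_le_eq card_gt_0_iff)
      then show "0 \<le> \<alpha> t i \<and> \<alpha> t i \<le> 1" by (simp add: \<alpha>_def fbk_def)
    qed
    have sum1: "(\<Sum>i<N. \<alpha> t i) = 1" for t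
    proof -
      let ?J = "max_set N (\<xi> t)"
      have sub: "?J \<subseteq> {..<N}" and fin: "finite ?J" and ne: "?J \<noteq> {}"
        using max_set_nonempty[OF N1] by auto
      have "(\<Sum>i<N. \<alpha> t i) = (\<Sum>i\<in>?J. 1 / real (card ?J))"
        unfolding \<alpha>_def fbk_def using sub by (simp add: sum.If_cases Int_absorb1 Int_commute)
      also have "\<dots> = 1" using fin ne by simp
      finally show ?thesis .
    qed
    have adm: "admissible_control N T \<alpha>"
      unfolding admissible_control_def
      using bnd sum1 meas_alpha[OF N1 _ _ tr m0] Tpos by auto
    have fb: "is_max_feedback N T \<alpha> \<xi>" by (simp add: is_max_feedback_def \<alpha>_def fbk_def)
    show ?thesis using adm tr fb by blast
  qed
  show "\<forall>\<alpha> \<xi>. admissible_control N T \<alpha> \<and> is_trajectory N T x0 \<alpha> \<xi> \<and> is_max_feedback N T \<alpha> \<xi>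
          \<longrightarrow> is_optimal N T x0 \<alpha> \<xi>"
  proof (intro allI impI)
    fix \<alpha> \<xi> assume h: "admissible_control N T \<alpha> \<and> is_trajectory N T x0 \<alpha> \<xi> \<and> is_max_feedback N T \<alpha> \<xi>"
    have "variance_cost N T \<xi> \<le> variance_cost N T \<eta>"
      if hb: "admissible_control N T \<beta> \<and> is_trajectory N T x0 \<beta> \<eta>" for \<beta> \<eta>
    proof -
      have c1: "continuous_on {0..T} (\<lambda>t. (\<Sum>i<N. (\<xi> t i)^2) / real N)"
        using h N1 by (intro continuous_intros) (auto simp: is_trajectory_def)
      have c2: "continuous_on {0..T} (\<lambda>t. (\<Sum>i<N. (\<eta> t i)^2) / real N)"
        using hb N1 by (intro continuous_intros) (auto simp: is_trajectory_def)
      show ?thesis unfolding variance_cost_def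
      proof (rule integral_le[OF integrable_continuous_interval[OF c1] integrable_continuous_interval[OF c2]])
        fix t assume t: "t \<in> {0..T}"
        have "(\<Sum>i<N. (\<xi> t i)^2) \<le> (\<Sum>i<N. (\<eta> t i)^2)"
          using pointwise[OF N1 m0 _ _ _ _ _ t, of \<alpha> \<xi> \<beta> \<eta>] h hb by blast
        then show "(\<Sum>i<N. (\<xi> t i)^2) / real N \<le> (\<Sum>i<N. (\<eta> t i)^2) / real N"
          by (simp add: divide_right_mono)
      qed
    qed
    then show "is_optimal N T x0 \<alpha> \<xi>" using h by (auto simp: is_optimal_def)
  qed
qed



end
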